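(* Let $\{X(s)\}_{s\ge 0}$ be a centered Gaussian process with continuous sample paths and covariance kernel $R$ such that (i) there is $\rho>0$ with $R(cs,ct)=c^{2\rho}R(s,t)$ for all $c>0$, $s,t>0$, and (ii) there is $\eta>0$ with $h(x):=x^{-\rho}R(1,x)=O((\log x)^{-\eta})$ as $x\to\infty$. For $\alpha>1$ let $t_n=\alpha^n$, $a_k=(2(\log(k+1)+\log\log\alpha))^{1/2}$, and let $\delta_j$ denote the correlation coefficient between $X(t_{k+1})-X(t_k)$ and $X(t_{k+j+1})-X(t_{k+j})$ (which depends only on $j$). For $|\delta|<1$ and $a,b\in\mathbb{R}$ let $\phi(\delta,a,b)=\mathbb{P}(Z_\delta\in[a,\infty)\times[b,\infty))-\mathbb{P}(Z_0\in[a,\infty)\times[b,\infty))$, where $Z_\delta\sim N\Big(0,\begin{pmatrix}1&\delta\\ \delta&1\end{pmatrix}\Big)$. Then for every $0<\epsilon<\frac12(\eta\wedge 1)$ and every sufficiently large $\alpha$, there exist constants $C_{\eta,\alpha}>0$ and $M_{\eta,\epsilon,\alpha}>0$ such that \[ |\phi(\delta_j,a_k,a_{k+j})|\le C_{\eta,\alpha}\,\frac{1}{k^{1+\epsilon}}\,\frac{1}{j^{1+\eta-2\epsilon}} \] for all $k\ge 1$ and all $j\ge M_{\eta,\epsilon,\alpha}$. *)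

theory Defs
  imports "HOL-Probability.Probability" "HOL-Library.Landau_Symbols"
begin

definition gaussian_rv :: "'a measure \<Rightarrow> ('a \<Rightarrow> real) \<Rightarrow> bool" where
  "gaussian_rv M Y \<longleftrightarrow> Y \<in> borel_measurable M \<and>
     ((\<exists>\<mu>. AE \<omega> in M. Y \<omega> = \<mu>) \<or>
      (\<exists>\<mu> \<sigma>. \<sigma> > 0 \<and> distributed M lborel Y (normal_density \<mu> \<sigma>)))"

definition gaussian_process :: "'a measure \<Rightarrow> (real \<Rightarrow> 'a \<Rightarrow> real) \<Rightarrow> bool" where
  "gaussian_process M X \<longleftrightarrow>
     (\<forall>F c. finite F \<longrightarrow> F \<subseteq> {0..} \<longrightarrow> gaussian_rv M (\<lambda>\<omega>. \<Sum>s\<in>F. c s * X s \<omega>))"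

definition covar :: "'a measure \<Rightarrow> ('a \<Rightarrow> real) \<Rightarrow> ('a \<Rightarrow> real) \<Rightarrow> real" where
  "covar M Y Z = (\<integral>\<omega>. (Y \<omega> - (\<integral>x. Y x \<partial>M)) * (Z \<omega> - (\<integral>x. Z x \<partial>M)) \<partial>M)"

definition correl :: "'a measure \<Rightarrow> ('a \<Rightarrow> real) \<Rightarrow> ('a \<Rightarrow> real) \<Rightarrow> real" where
  "correl M Y Z = covar M Y Z / sqrt (covar M Y Y * covar M Z Z)"

definition incr :: "(real \<Rightarrow> 'a \<Rightarrow> real) \<Rightarrow> real \<Rightarrow> nat \<Rightarrow> 'a \<Rightarrow> real" where
  "incr X \<alpha> k \<omega> = X (\<alpha> ^ (k+1)) \<omega> - X (\<alpha> ^ k) \<omega>"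

definition delta_corr :: "'a measure \<Rightarrow> (real \<Rightarrow> 'a \<Rightarrow> real) \<Rightarrow> real \<Rightarrow> nat \<Rightarrow> nat \<Rightarrow> real" where
  "delta_corr M X \<alpha> k j = correl M (incr X \<alpha> k) (incr X \<alpha> (k+j))"

definition a_seq :: "real \<Rightarrow> nat \<Rightarrow> real" where
  "a_seq \<alpha> k = sqrt (2 * (ln (real k + 1) + ln (ln \<alpha>)))"

definition bvn_density :: "real \<Rightarrow> real \<times> real \<Rightarrow> real" where
  "bvn_density \<delta> z = exp (- ((fst z)\<^sup>2 - 2 * \<delta> * fst z * snd z + (snd z)\<^sup>2) / (2 * (1 - \<delta>\<^sup>2)))
                      / (2 * pi * sqrt (1 - \<delta>\<^sup>2))"

definition bvn_prob :: "real \<Rightarrow> real \<Rightarrow> real \<Rightarrow> real" where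
  "bvn_prob \<delta> a b = (LINT z:{a..} \<times> {b..}|lborel. bvn_density \<delta> z)"

definition phi_fun :: "real \<Rightarrow> real \<Rightarrow> real \<Rightarrow> real" where
  "phi_fun \<delta> a b = bvn_prob \<delta> a b - bvn_prob 0 a b"

end

theory Submission
  imports Defs "HOL-Real_Asymp.Real_Asymp"
begin
lemma tail_lim:
  fixes c :: real assumes "c > 0"
  shows "((\<lambda>x. - (x\<^sup>2 / c + 2 / c\<^sup>2) * exp (- c * x\<^sup>2 / 2)) \<longlongrightarrow> 0) at_top"
  using assms by real_asymp

lemma tail_nn:
  fixes c a :: real assumes c: "c > 0" and a: "a \<ge> 0"
  shows "(\<integral>\<^sup>+x. ennreal (x^3 * exp (- c * x\<^sup>2 / 2)) * indicator {a..} x \<partial>lborel)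
     = ennreal ((a\<^sup>2 / c + 2 / c\<^sup>2) * exp (- c * a\<^sup>2 / 2))"
proof -
  have "(\<integral>\<^sup>+x. ennreal (x^3 * exp (- c * x\<^sup>2 / 2)) * indicator {a..} x \<partial>lborel)
     = ennreal (0 - (- (a\<^sup>2 / c + 2 / c\<^sup>2) * exp (- c * a\<^sup>2 / 2)))"
  proof (rule nn_integral_FTC_atLeast)
    show "(\<lambda>x. x^3 * exp (- c * x\<^sup>2 / 2)) \<in> borel_measurable borel" by measurable
    show "((\<lambda>x. - (x\<^sup>2 / c + 2 / c\<^sup>2) * exp (- c * x\<^sup>2 / 2)) \<longlongrightarrow> 0) at_top"
      by (rule tail_lim[OF c])
  next
    fix x :: real assume "a \<le> x"
    show "((\<lambda>x. - (x\<^sup>2 / c + 2 / c\<^sup>2) * exp (- c * x\<^sup>2 / 2)) has_real_derivative x^3 * exp (- c * x\<^sup>2 / 2)) (at x)"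
      using c by (auto intro!: derivative_eq_intros simp: field_simps power2_eq_square power3_eq_cube)
    show "0 \<le> x^3 * exp (- c * x\<^sup>2 / 2)" using \<open>a \<le> x\<close> a by simp
  qed
  then show ?thesis by (simp add: algebra_simps)
qed

definition gg :: "real \<Rightarrow> real \<Rightarrow> real" where
  "gg c x = x^3 * exp (- c * x\<^sup>2 / 2)"
definition JJ :: "real \<Rightarrow> real \<Rightarrow> real" where
  "JJ c a = (a\<^sup>2 / c + 2 / c\<^sup>2) * exp (- c * a\<^sup>2 / 2)"

lemma gg_meas[measurable]: "gg c \<in> borel_measurable borel"
  unfolding gg_def by measurable

lemma JJ_nonneg: "c > 0 \<Longrightarrow> JJ c a \<ge> 0"
  unfolding JJ_def by (auto intro!: mult_nonneg_nonneg add_nonneg_nonneg)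

lemma prod_nn:
  fixes c a b :: real assumes c: "c > 0" and a: "a \<ge> 0" and b: "b \<ge> 0"
  shows "(\<integral>\<^sup>+z. ennreal (gg c (fst z) * gg c (snd z)) * indicator ({a..} \<times> {b..}) z \<partial>lborel)
     = ennreal (JJ c a * JJ c b)"
proof -
  have eq: "ennreal (gg c (fst z) * gg c (snd z)) * indicator ({a..} \<times> {b..}) z
      = (ennreal (gg c (fst z)) * indicator {a..} (fst z)) * (ennreal (gg c (snd z)) * indicator {b..} (snd z))" for z
    using a b
    by (cases z) (auto simp: indicator_def gg_def ennreal_mult)
  have "(\<integral>\<^sup>+z. ennreal (gg c (fst z) * gg c (snd z)) * indicator ({a..} \<times> {b..}) z \<partial>lborel)
      = (\<integral>\<^sup>+z. (ennreal (gg c (fst z)) * indicator {a..} (fst z)) * (ennreal (gg c (snd z)) * indicator {b..} (snd z)) \<partial>(lborel \<Otimes>\<^sub>M lborel))"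
    by (simp only: eq lborel_prod)
  also have "\<dots> = (\<integral>\<^sup>+x. \<integral>\<^sup>+y. (ennreal (gg c x) * indicator {a..} x) * (ennreal (gg c y) * indicator {b..} y) \<partial>lborel \<partial>lborel)"
    by (subst lborel.nn_integral_fst[symmetric]) (auto)
  also have "\<dots> = (\<integral>\<^sup>+x. (ennreal (gg c x) * indicator {a..} x) * (\<integral>\<^sup>+y. ennreal (gg c y) * indicator {b..} y \<partial>lborel) \<partial>lborel)"
    by (subst nn_integral_cmult) auto
  also have "\<dots> = (\<integral>\<^sup>+x. ennreal (gg c x) * indicator {a..} x \<partial>lborel) * (\<integral>\<^sup>+y. ennreal (gg c y) * indicator {b..} y \<partial>lborel)"
    by (subst nn_integral_multc) auto
  also have "\<dots> = ennreal (JJ c a) * ennreal (JJ c b)"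
    using tail_nn[OF c a] tail_nn[OF c b] unfolding gg_def JJ_def by simp
  also have "\<dots> = ennreal (JJ c a * JJ c b)"
    using JJ_nonneg[OF c] by (simp add: ennreal_mult)
  finally show ?thesis .
qed

lemma exp_diff_bound:
  fixes p q :: real
  shows "\<bar>exp (-p) - exp (-q)\<bar> \<le> \<bar>p - q\<bar> * exp (- min p q)"
proof -
  have key: "exp (-p) - exp (-q) \<le> (q - p) * exp (-p)" if "p \<le> q" for p q :: real
  proof -
    have "1 - (q - p) \<le> exp (-(q - p))" using exp_ge_add_one_self[of "-(q-p)"] by linarith
    then have "exp (-p) * (1 - exp (-(q-p))) \<le> exp (-p) * (q - p)"
      by (intro mult_left_mono) auto
    moreover have "exp (-p) * exp (-(q-p)) = exp (-q)" by (simp add: exp_add[symmetric])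
    ultimately show ?thesis by (simp add: algebra_simps)
  qed
  show ?thesis
  proof (cases "p \<le> q")
    case True
    with key[OF True] show ?thesis by (simp add: min_def abs_if)
  next
    case False
    with key[of q p] show ?thesis by (simp add: min_def abs_if)
  qed
qed

lemma bvn0: "bvn_density 0 z = exp (- ((fst z)\<^sup>2 + (snd z)\<^sup>2) / 2) / (2 * pi)"
  unfolding bvn_density_def by simp

lemma Q_lower:
  fixes x y \<delta> :: real assumes "x \<ge> 0" "y \<ge> 0"
  shows "x\<^sup>2 - 2 * \<delta> * x * y + y\<^sup>2 \<ge> (1 - \<bar>\<delta>\<bar>) * (x\<^sup>2 + y\<^sup>2)"
proof -
  have "2 * x * y \<le> x\<^sup>2 + y\<^sup>2" using sum_squares_bound[of x y] by (simp add: power2_eq_square)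
  have "\<bar>2 * \<delta> * x * y\<bar> = \<bar>\<delta>\<bar> * (2 * x * y)" using assms by (simp add: abs_mult)
  also have "\<dots> \<le> \<bar>\<delta>\<bar> * (x\<^sup>2 + y\<^sup>2)" using \<open>2 * x * y \<le> _\<close> by (intro mult_left_mono) auto
  finally show ?thesis by (simp add: algebra_simps)
qed

lemma pointwise:
  fixes \<delta> x y :: real
  assumes d: "\<bar>\<delta>\<bar> \<le> 1/2" and x: "x \<ge> 1" and y: "y \<ge> 1"
  defines "c \<equiv> 1 - \<bar>\<delta>\<bar>"
  shows "bvn_density \<delta> (x, y) \<le> gg c x * gg c y"
    and "bvn_density 0 (x, y) \<le> gg c x * gg c y"
    and "\<bar>bvn_density \<delta> (x, y) - bvn_density 0 (x, y)\<bar> \<le> 2 * \<bar>\<delta>\<bar> * (gg c x * gg c y)"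
proof -
  define d where "d = \<bar>\<delta>\<bar>"
  define Q where "Q = x\<^sup>2 - 2 * \<delta> * x * y + y\<^sup>2"
  define r where "r = 1 - \<delta>\<^sup>2"
  define s where "s = sqrt r"
  define u where "u = Q / (2 * r)"
  define v where "v = (x\<^sup>2 + y\<^sup>2) / 2"
  define E where "E = exp (- c * x\<^sup>2 / 2) * exp (- c * y\<^sup>2 / 2)"
  have d0: "0 \<le> d" "d \<le> 1/2" using d by (auto simp: d_def)
  have c_def': "c = 1 - d" by (simp add: c_def d_def)
  have dd: "\<delta>\<^sup>2 = d\<^sup>2" by (simp add: d_def)
  have r1: "r \<ge> 3/4" "r \<le> 1"
  proof -
    have "d\<^sup>2 \<le> (1/2)\<^sup>2" using d0 by (intro power_mono) auto
    then have "\<delta>\<^sup>2 \<le> 1/4" using dd by (simp add: power2_eq_square)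
    then show "r \<ge> 3/4" by (simp add: r_def)
    show "r \<le> 1" by (simp add: r_def)
  qed
  have s1: "s \<ge> 1/2" "s \<le> 1" "s > 0"
  proof -
    have "sqrt (1/4) \<le> sqrt r" using r1 by (intro real_sqrt_le_mono) auto
    moreover have "sqrt (1/4) = (1/2::real)" by (simp add: real_sqrt_divide)
    ultimately show "s \<ge> 1/2" by (simp add: s_def)
    show "s \<le> 1" using r1 by (simp add: s_def)
    then show "s > 0" using \<open>s \<ge> 1/2\<close> by simp
  qed
  have ssq: "s\<^sup>2 = r" using r1 by (simp add: s_def)
  have Ql: "Q \<ge> c * (x\<^sup>2 + y\<^sup>2)" unfolding Q_def c_def using Q_lower[of x y \<delta>] x y by simp
  have c0: "c \<ge> 1/2" "c \<le> 1" using d0 by (auto simp: c_def')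
  have "c * (x\<^sup>2 + y\<^sup>2) \<ge> 0" using c0 by simp
  then have Q0: "Q \<ge> 0" using Ql by linarith
  have "- c * x\<^sup>2 / 2 + - c * y\<^sup>2 / 2 = - (c * v)" by (simp add: v_def field_simps)
  then have E_eq: "E = exp (- (c * v))" unfolding E_def by (simp only: exp_add[symmetric])
  have u_ge: "u \<ge> c * v"
  proof -
    have "Q / (2 * r) \<ge> Q / 2" using Q0 r1 by (intro divide_left_mono) auto
    then show ?thesis using Ql by (simp add: u_def v_def)
  qed
  have "v \<ge> 0" by (simp add: v_def)
  then have v_ge: "v \<ge> c * v" using c0 mult_right_mono[of c 1 v] by simp
  have eu: "exp (-u) \<le> E" using u_ge by (simp add: E_eq)
  have ev: "exp (-v) \<le> E" using v_ge by (simp add: E_eq)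
  have E0: "E \<ge> 0" by (simp add: E_def)
  have "1 \<le> x\<^sup>2" "1 \<le> y\<^sup>2" using x y by (simp_all add: one_le_power)
  then have xy1: "x\<^sup>2 * y\<^sup>2 \<ge> 1" using mult_mono[of 1 "x\<^sup>2" 1 "y\<^sup>2"] by simp
  have xy3: "x\<^sup>2 * y\<^sup>2 \<le> x^3 * y^3"
    using x y by (intro mult_mono power_increasing) auto
  have gg_eq: "gg c x * gg c y = x^3 * y^3 * E" by (simp add: gg_def E_def)
  have fd: "bvn_density \<delta> (x, y) = exp (-u) / (2 * pi * s)"
    unfolding bvn_density_def u_def Q_def r_def s_def by (simp add: minus_divide_left)
  have f0: "bvn_density 0 (x, y) = exp (-v) / (2 * pi)"
    unfolding bvn0 v_def by (simp add: minus_divide_left)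
  have pi3: "pi \<ge> 3" using pi_gt3 by simp
  show "bvn_density \<delta> (x, y) \<le> gg c x * gg c y"
  proof -
    have "exp (-u) / (2 * pi * s) \<le> exp (-u)"
    proof -
      have "2 * 3 * (1/2) \<le> 2 * pi * s" using s1 pi3 by (intro mult_mono) auto
      then show ?thesis using divide_left_mono[of 1 "2 * pi * s" "exp (-u)"] by simp
    qed
    also have "\<dots> \<le> E" by (rule eu)
    also have "\<dots> \<le> x^3 * y^3 * E" using xy1 xy3 E0 mult_right_mono[of 1 "x^3 * y^3" E] by simp
    finally show ?thesis by (simp add: fd gg_eq)
  qed
  show "bvn_density 0 (x, y) \<le> gg c x * gg c y"
  proof -
    have "exp (-v) / (2 * pi) \<le> exp (-v)"
      using pi3 divide_left_mono[of 1 "2 * pi" "exp (-v)"] by simp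
    also have "\<dots> \<le> E" by (rule ev)
    also have "\<dots> \<le> x^3 * y^3 * E" using xy1 xy3 E0 mult_right_mono[of 1 "x^3 * y^3" E] by simp
    finally show ?thesis by (simp add: f0 gg_eq)
  qed
  show "\<bar>bvn_density \<delta> (x, y) - bvn_density 0 (x, y)\<bar> \<le> 2 * \<bar>\<delta>\<bar> * (gg c x * gg c y)"
  proof -
    define N where "N = x\<^sup>2 * y\<^sup>2"
    define A where "A = exp (-u)"
    define B where "B = exp (-v)"
    have N1: "N \<ge> 1" using xy1 by (simp add: N_def)
    have xy2: "x + y \<le> 2 * (x * y)"
    proof -
      have "x \<le> x * y" using x y mult_left_mono[of 1 y x] by simp
      moreover have "y \<le> x * y" using x y mult_right_mono[of 1 x y] by simp
      ultimately show ?thesis by simp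
    qed
    have xy4: "(x + y)\<^sup>2 \<le> 4 * N"
    proof -
      have "(x + y)\<^sup>2 \<le> (2 * (x * y))\<^sup>2" using xy2 x y by (intro power_mono) auto
      then show ?thesis by (simp add: N_def power_mult_distrib)
    qed
    have num: "Q - r * (x\<^sup>2 + y\<^sup>2) = \<delta>\<^sup>2 * (x\<^sup>2 + y\<^sup>2) - 2 * \<delta> * x * y"
      by (simp add: Q_def r_def algebra_simps)
    have "\<bar>\<delta>\<^sup>2 * (x\<^sup>2 + y\<^sup>2) - 2 * \<delta> * x * y\<bar> \<le> d\<^sup>2 * (x\<^sup>2 + y\<^sup>2) + d * (2 * x * y)"
    proof -
      have "\<bar>\<delta>\<^sup>2 * (x\<^sup>2 + y\<^sup>2) - 2 * \<delta> * x * y\<bar> \<le> \<bar>\<delta>\<^sup>2 * (x\<^sup>2 + y\<^sup>2)\<bar> + \<bar>2 * \<delta> * x * y\<bar>"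
        by (rule abs_triangle_ineq4)
      moreover have "\<bar>\<delta>\<^sup>2 * (x\<^sup>2 + y\<^sup>2)\<bar> = d\<^sup>2 * (x\<^sup>2 + y\<^sup>2)"
        by (simp add: abs_mult dd)
      moreover have "\<bar>2 * \<delta> * x * y\<bar> = d * (2 * x * y)"
        using x y by (simp add: abs_mult d_def)
      ultimately show ?thesis by simp
    qed
    also have "\<dots> \<le> d * (x\<^sup>2 + y\<^sup>2) + d * (2 * x * y)"
    proof -
      have "d\<^sup>2 \<le> d" using d0 by (simp add: power2_eq_square mult_left_le_one_le)
      then show ?thesis by (intro add_right_mono mult_right_mono) auto
    qed
    also have "\<dots> = d * (x + y)\<^sup>2" by (simp add: power2_eq_square algebra_simps)
    also have "\<dots> \<le> d * (4 * N)" using xy4 d0 by (intro mult_left_mono) auto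
    finally have numb: "\<bar>Q - r * (x\<^sup>2 + y\<^sup>2)\<bar> \<le> 4 * d * N" by (simp add: num)
    have "u - v = (Q - r * (x\<^sup>2 + y\<^sup>2)) / (2 * r)"
      using r1 by (simp add: u_def v_def field_simps)
    then have "\<bar>u - v\<bar> = \<bar>Q - r * (x\<^sup>2 + y\<^sup>2)\<bar> / (2 * r)" using r1 by simp
    also have "\<dots> \<le> (4 * d * N) / (2 * (3/4))"
      using numb r1 N1 d0 by (intro frac_le) auto
    finally have uv: "\<bar>u - v\<bar> \<le> 8/3 * d * N" by simp
    have "exp (- min u v) \<le> E" using u_ge v_ge by (simp add: E_eq min_def)
    then have AB: "\<bar>A - B\<bar> \<le> 8/3 * d * N * E"
    proof -
      have "\<bar>A - B\<bar> \<le> \<bar>u - v\<bar> * exp (- min u v)" using exp_diff_bound[of u v] by (simp add: A_def B_def)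
      also have "\<dots> \<le> (8/3 * d * N) * E"
        using uv \<open>exp (- min u v) \<le> E\<close> N1 d0 by (intro mult_mono) auto
      finally show ?thesis .
    qed
    have s_inv: "1 / s \<le> 2" using s1 by (simp add: divide_le_eq)
    have s_inv1: "1 / s - 1 \<ge> 0" using s1 by (simp add: le_divide_eq)
    have "1 - s \<le> 1 - s\<^sup>2" using s1 by (simp add: power2_eq_square mult_left_le_one_le)
    then have "1 - s \<le> d\<^sup>2" using ssq by (simp add: r_def dd)
    then have "(1 - s) / s \<le> d\<^sup>2 / s" using s1 by (intro divide_right_mono) auto
    also have "\<dots> = d\<^sup>2 * (1 / s)" by simp
    also have "\<dots> \<le> d\<^sup>2 * 2" using s_inv by (intro mult_left_mono) auto
    also have "\<dots> \<le> d"
    proof -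
      have "d * d \<le> d * (1/2)" using d0 by (intro mult_left_mono) auto
      then show ?thesis by (simp add: power2_eq_square)
    qed
    finally have s_d: "1 / s - 1 \<le> d" using s1 by (simp add: diff_divide_distrib)
    have B0: "B \<ge> 0" "B \<le> E" using ev by (auto simp: B_def)
    have eq: "A / (2 * pi * s) - B / (2 * pi) = ((A - B) / s + B * (1 / s - 1)) / (2 * pi)"
      using s1 by (simp add: field_simps)
    have "\<bar>(A - B) / s + B * (1 / s - 1)\<bar> \<le> \<bar>A - B\<bar> / s + B * (1 / s - 1)"
    proof -
      have "\<bar>(A - B) / s + B * (1 / s - 1)\<bar> \<le> \<bar>(A - B) / s\<bar> + \<bar>B * (1 / s - 1)\<bar>"
        by (rule abs_triangle_ineq)
      moreover have "\<bar>(A - B) / s\<bar> = \<bar>A - B\<bar> / s" using s1 by simp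
      moreover have "\<bar>B * (1 / s - 1)\<bar> = B * (1 / s - 1)" using B0 s_inv1 by (simp add: abs_mult)
      ultimately show ?thesis by linarith
    qed
    also have "\<dots> \<le> \<bar>A - B\<bar> * 2 + E * d"
    proof (rule add_mono)
      show "\<bar>A - B\<bar> / s \<le> \<bar>A - B\<bar> * 2"
        using s_inv by (simp add: divide_inverse) (metis abs_ge_zero inverse_eq_divide mult_left_mono)
      show "B * (1 / s - 1) \<le> E * d" using B0 s_d s_inv1 by (intro mult_mono) auto
    qed
    also have "\<dots> \<le> (8/3 * d * N * E) * 2 + E * d * N"
    proof (rule add_mono)
      show "\<bar>A - B\<bar> * 2 \<le> 8/3 * d * N * E * 2" using AB by (simp add: mult_ac)
      have "E * d * 1 \<le> E * d * N" using N1 E0 d0 by (intro mult_left_mono) auto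
      then show "E * d \<le> E * d * N" by simp
    qed
    also have "\<dots> = 19/3 * (d * N * E)" by (simp add: algebra_simps)
    finally have tot: "\<bar>(A - B) / s + B * (1 / s - 1)\<bar> \<le> 19/3 * (d * N * E)" .
    have dNE: "d * N * E \<ge> 0" using d0 N1 E0 by simp
    have "\<bar>A / (2 * pi * s) - B / (2 * pi)\<bar> = \<bar>(A - B) / s + B * (1 / s - 1)\<bar> / (2 * pi)"
      by (simp add: eq)
    also have "\<dots> \<le> (19/3 * (d * N * E)) / 6"
      using tot pi3 dNE by (intro frac_le) (auto simp: mult_ac)
    also have "\<dots> \<le> 2 * (d * N * E)" using dNE by linarith
    also have "\<dots> \<le> 2 * (d * (x^3 * y^3) * E)"
      using xy3 d0 E0 by (intro mult_left_mono mult_right_mono) (auto simp: N_def)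
    finally show ?thesis
      by (simp add: fd f0 gg_eq A_def B_def d_def mult.assoc mult.left_commute)
  qed
qed

lemma bvn_meas[measurable]: "bvn_density \<delta> \<in> borel_measurable lborel"
proof -
  have "bvn_density \<delta> \<in> borel_measurable (borel \<Otimes>\<^sub>M borel)"
    unfolding bvn_density_def by measurable
  then show ?thesis by (simp add: borel_prod)
qed

lemma gg2_meas[measurable]: "(\<lambda>z::real\<times>real. gg c (fst z) * gg c (snd z)) \<in> borel_measurable lborel"
proof -
  have "(\<lambda>z::real\<times>real. gg c (fst z) * gg c (snd z)) \<in> borel_measurable (borel \<Otimes>\<^sub>M borel)"
    by measurable
  then show ?thesis by (simp add: borel_prod)
qed

lemma bvn_nonneg: "\<bar>\<delta>\<bar> \<le> 1 \<Longrightarrow> bvn_density \<delta> z \<ge> 0"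
  unfolding bvn_density_def by (auto intro!: divide_nonneg_nonneg simp: abs_square_le_1)

lemma gg_nonneg: "x \<ge> 0 \<Longrightarrow> gg c x \<ge> 0"
  unfolding gg_def by simp

lemma phi_bound:
  fixes \<delta> a b :: real
  assumes d: "\<bar>\<delta>\<bar> \<le> 1/2" and a: "a \<ge> 1" and b: "b \<ge> 1"
  shows "\<bar>phi_fun \<delta> a b\<bar> \<le> 2 * \<bar>\<delta>\<bar> * (JJ (1 - \<bar>\<delta>\<bar>) a * JJ (1 - \<bar>\<delta>\<bar>) b)"
proof -
  define c where "c = 1 - \<bar>\<delta>\<bar>"
  define S where "S = {a..} \<times> {b..}"
  define W where "W z = gg c (fst z) * gg c (snd z)" for z :: "real \<times> real"
  have c: "c > 0" using d by (simp add: c_def)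
  have W_meas[measurable]: "W \<in> borel_measurable lborel" unfolding W_def by (rule gg2_meas)
  have S_meas[measurable]: "S \<in> sets lborel" unfolding S_def by (simp add: borel_closed closed_Times closed_atLeast)
  have nnW: "(\<integral>\<^sup>+z. ennreal (W z) * indicator S z \<partial>lborel) = ennreal (JJ c a * JJ c b)"
    unfolding W_def S_def using prod_nn[OF c, of a b] a b by simp
  have inS: "fst z \<ge> 1" "snd z \<ge> 1" if "z \<in> S" for z
    using that a b by (auto simp: S_def)
  have pw: "bvn_density \<delta> z \<le> W z" "bvn_density 0 z \<le> W z"
    "\<bar>bvn_density \<delta> z - bvn_density 0 z\<bar> \<le> 2 * \<bar>\<delta>\<bar> * W z" if "z \<in> S" for z
    using pointwise[OF d inS[OF that]] unfolding W_def c_def by (cases z; simp)+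
  have integ: "set_integrable lborel S (bvn_density e)" if e: "e = \<delta> \<or> e = 0" for e
    unfolding set_integrable_def
  proof (rule integrableI_bounded)
    show "(\<lambda>z. indicator S z *\<^sub>R bvn_density e z) \<in> borel_measurable lborel" by measurable
    have "(\<integral>\<^sup>+z. ennreal (norm (indicator S z *\<^sub>R bvn_density e z)) \<partial>lborel)
        \<le> (\<integral>\<^sup>+z. ennreal (W z) * indicator S z \<partial>lborel)"
    proof (rule nn_integral_mono)
      fix z :: "real \<times> real"
      show "ennreal (norm (indicator S z *\<^sub>R bvn_density e z)) \<le> ennreal (W z) * indicator S z"
      proof (cases "z \<in> S")
        case True
        then have "bvn_density e z \<le> W z" using pw(1,2)[OF True] e by blast
        moreover have "bvn_density e z \<ge> 0" using e d by (intro bvn_nonneg) auto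
        ultimately show ?thesis using True by simp
      qed simp
    qed
    also have "\<dots> < \<infinity>" using nnW by simp
    finally show "(\<integral>\<^sup>+z. ennreal (norm (indicator S z *\<^sub>R bvn_density e z)) \<partial>lborel) < \<infinity>" .
  qed
  have "phi_fun \<delta> a b = (LINT z:S|lborel. bvn_density \<delta> z - bvn_density 0 z)"
    unfolding phi_fun_def bvn_prob_def S_def[symmetric]
    by (rule set_integral_diff(2)[symmetric]) (use integ in auto)
  also have "\<dots> = integral\<^sup>L lborel (\<lambda>z. indicator S z *\<^sub>R (bvn_density \<delta> z - bvn_density 0 z))"
    by (simp add: set_lebesgue_integral_def)
  finally have phi_eq: "phi_fun \<delta> a b = \<dots>" .
  have int_diff: "integrable lborel (\<lambda>z. indicator S z *\<^sub>R (bvn_density \<delta> z - bvn_density 0 z))"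
    using set_integral_diff(1)[OF integ integ] unfolding set_integrable_def by auto
  have "ennreal \<bar>phi_fun \<delta> a b\<bar>
      \<le> (\<integral>\<^sup>+z. ennreal (norm (indicator S z *\<^sub>R (bvn_density \<delta> z - bvn_density 0 z))) \<partial>lborel)"
    unfolding phi_eq using integral_norm_bound_ennreal[OF int_diff] by simp
  also have "\<dots> \<le> (\<integral>\<^sup>+z. ennreal (2 * \<bar>\<delta>\<bar>) * (ennreal (W z) * indicator S z) \<partial>lborel)"
  proof (rule nn_integral_mono)
    fix z :: "real \<times> real"
    show "ennreal (norm (indicator S z *\<^sub>R (bvn_density \<delta> z - bvn_density 0 z)))
        \<le> ennreal (2 * \<bar>\<delta>\<bar>) * (ennreal (W z) * indicator S z)"
    proof (cases "z \<in> S")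
      case True
      then have "\<bar>bvn_density \<delta> z - bvn_density 0 z\<bar> \<le> 2 * \<bar>\<delta>\<bar> * W z" using pw(3)[OF True] by blast
      moreover have "W z \<ge> 0" using inS[OF True] by (simp add: W_def gg_nonneg)
      ultimately show ?thesis using True by (simp add: ennreal_mult[symmetric] ennreal_leI)
    qed simp
  qed
  also have "\<dots> = ennreal (2 * \<bar>\<delta>\<bar>) * ennreal (JJ c a * JJ c b)"
    by (subst nn_integral_cmult) (auto simp: nnW)
  also have "\<dots> = ennreal (2 * \<bar>\<delta>\<bar> * (JJ c a * JJ c b))"
    using JJ_nonneg[OF c] by (simp add: ennreal_mult)
  finally show ?thesis unfolding c_def
    using JJ_nonneg[OF c] by (subst (asm) ennreal_le_iff) (auto simp: c_def)
qed

lemma gp_sq_integrable: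
  assumes P: "prob_space M" and G: "gaussian_process M X"
    and I: "integrable M (X s)" and s: "s \<ge> 0"
  shows "integrable M (\<lambda>\<omega>. (X s \<omega>)\<^sup>2)"
proof -
  interpret prob_space M by (rule P)
  have "\<forall>F c. finite F \<longrightarrow> F \<subseteq> {0..} \<longrightarrow> gaussian_rv M (\<lambda>\<omega>. \<Sum>s\<in>F. c s * X s \<omega>)"
    using G unfolding gaussian_process_def by simp
  then have "gaussian_rv M (\<lambda>\<omega>. \<Sum>u\<in>{s}. (\<lambda>_. 1::real) u * X u \<omega>)"
    using s by (elim allE[of _ "{s}"] allE[of _ "\<lambda>_. 1::real"]) simp
  then have g: "gaussian_rv M (X s)" by simp
  then have meas[measurable]: "X s \<in> borel_measurable M" by (simp add: gaussian_rv_def)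
  from g consider (const) \<mu> where "AE \<omega> in M. X s \<omega> = \<mu>"
    | (norm) \<mu> \<sigma> where "\<sigma> > 0" "distributed M lborel (X s) (normal_density \<mu> \<sigma>)"
    unfolding gaussian_rv_def by blast
  then show ?thesis
  proof cases
    case const
    have "integrable M (\<lambda>\<omega>. \<mu>\<^sup>2)" by simp
    moreover have "(\<lambda>\<omega>. (X s \<omega>)\<^sup>2) \<in> borel_measurable M" by measurable
    moreover have "AE \<omega> in M. (\<lambda>\<omega>. \<mu>\<^sup>2) \<omega> = (\<lambda>\<omega>. (X s \<omega>)\<^sup>2) \<omega>"
      using const by eventually_elim simp
    ultimately show ?thesis by (rule integrable_cong_AE_imp)
  next
    case norm
    have "integrable lborel (\<lambda>x. normal_density \<mu> \<sigma> x * (x - \<mu>)^2)"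
      using norm(1) by (rule integrable_normal_moment)
    moreover have "integrable lborel (\<lambda>x. normal_density \<mu> \<sigma> x * (x - \<mu>)^2) \<longleftrightarrow> integrable M (\<lambda>\<omega>. (X s \<omega> - \<mu>)^2)"
      by (rule distributed_integrable[OF norm(2)]) auto
    ultimately have "integrable M (\<lambda>\<omega>. (X s \<omega> - \<mu>)^2)" by blast
    then have "integrable M (\<lambda>\<omega>. (X s \<omega> - \<mu>)^2 + 2 * \<mu> * X s \<omega> - \<mu>\<^sup>2)"
      using I by (intro Bochner_Integration.integrable_diff Bochner_Integration.integrable_add) auto
    moreover have "(\<lambda>\<omega>. (X s \<omega> - \<mu>)^2 + 2 * \<mu> * X s \<omega> - \<mu>\<^sup>2) = (\<lambda>\<omega>. (X s \<omega>)\<^sup>2)"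
      by (auto simp: power2_eq_square algebra_simps)
    ultimately show ?thesis by simp
  qed
qed

lemma prod_integrable:
  fixes Y Z :: "'a \<Rightarrow> real"
  assumes "integrable M (\<lambda>\<omega>. (Y \<omega>)\<^sup>2)" "integrable M (\<lambda>\<omega>. (Z \<omega>)\<^sup>2)"
    and [measurable]: "Y \<in> borel_measurable M" "Z \<in> borel_measurable M"
  shows "integrable M (\<lambda>\<omega>. Y \<omega> * Z \<omega>)"
proof (rule Bochner_Integration.integrable_bound[where f="\<lambda>\<omega>. (Y \<omega>)\<^sup>2 + (Z \<omega>)\<^sup>2"])
  show "integrable M (\<lambda>\<omega>. (Y \<omega>)\<^sup>2 + (Z \<omega>)\<^sup>2)" using assms by auto
  show "(\<lambda>\<omega>. Y \<omega> * Z \<omega>) \<in> borel_measurable M" by measurable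
  show "AE \<omega> in M. norm (Y \<omega> * Z \<omega>) \<le> norm ((Y \<omega>)\<^sup>2 + (Z \<omega>)\<^sup>2)"
  proof (rule AE_I2)
    fix \<omega>
    have h: "2 * \<bar>Y \<omega>\<bar> * \<bar>Z \<omega>\<bar> \<le> (Y \<omega>)\<^sup>2 + (Z \<omega>)\<^sup>2"
      using sum_squares_bound[of "\<bar>Y \<omega>\<bar>" "\<bar>Z \<omega>\<bar>"] by simp
    have h2: "0 \<le> \<bar>Y \<omega>\<bar> * \<bar>Z \<omega>\<bar>" by simp
    have "norm (Y \<omega> * Z \<omega>) = \<bar>Y \<omega>\<bar> * \<bar>Z \<omega>\<bar>" by (simp add: abs_mult)
    moreover have "norm ((Y \<omega>)\<^sup>2 + (Z \<omega>)\<^sup>2) = (Y \<omega>)\<^sup>2 + (Z \<omega>)\<^sup>2" by simp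
    ultimately show "norm (Y \<omega> * Z \<omega>) \<le> norm ((Y \<omega>)\<^sup>2 + (Z \<omega>)\<^sup>2)"
      using h h2 by linarith
  qed
qed

lemma cov_formula:
  assumes P: "prob_space M" and G: "gaussian_process M X"
    and Mean: "\<forall>s\<ge>0. integrable M (X s) \<and> (\<integral>\<omega>. X s \<omega> \<partial>M) = 0"
    and Rd: "\<forall>s\<ge>0. \<forall>t\<ge>0. R s t = covar M (X s) (X t)"
    and nn: "s1 \<ge> 0" "s0 \<ge> 0" "t1 \<ge> 0" "t0 \<ge> 0"
  shows "covar M (\<lambda>\<omega>. X s1 \<omega> - X s0 \<omega>) (\<lambda>\<omega>. X t1 \<omega> - X t0 \<omega>)
       = R s1 t1 - R s1 t0 - R s0 t1 + R s0 t0"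
proof -
  have I: "integrable M (X u)" if "u \<ge> 0" for u using Mean that by blast
  have E: "(\<integral>\<omega>. X u \<omega> \<partial>M) = 0" if "u \<ge> 0" for u using Mean that by blast
  have meas: "X u \<in> borel_measurable M" if "u \<ge> 0" for u using I[OF that] by auto
  have PI: "integrable M (\<lambda>\<omega>. X u \<omega> * X v \<omega>)" if "u \<ge> 0" "v \<ge> 0" for u v
    using prod_integrable[OF gp_sq_integrable[OF P G I[OF that(1)] that(1)]
        gp_sq_integrable[OF P G I[OF that(2)] that(2)] meas[OF that(1)] meas[OF that(2)]] .
  have Rf: "R u v = (\<integral>\<omega>. X u \<omega> * X v \<omega> \<partial>M)" if "u \<ge> 0" "v \<ge> 0" for u v
    using Rd that E[OF that(1)] E[OF that(2)] by (simp add: covar_def)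
  have ED: "(\<integral>\<omega>. X u \<omega> - X v \<omega> \<partial>M) = 0" if "u \<ge> 0" "v \<ge> 0" for u v
    using that by (simp add: Bochner_Integration.integral_diff I E)
  have "covar M (\<lambda>\<omega>. X s1 \<omega> - X s0 \<omega>) (\<lambda>\<omega>. X t1 \<omega> - X t0 \<omega>)
      = (\<integral>\<omega>. (X s1 \<omega> * X t1 \<omega> - X s1 \<omega> * X t0 \<omega>) - (X s0 \<omega> * X t1 \<omega> - X s0 \<omega> * X t0 \<omega>) \<partial>M)"
    unfolding covar_def ED[OF nn(1,2)] ED[OF nn(3,4)]
    by (simp add: algebra_simps)
  also have "\<dots> = ((\<integral>\<omega>. X s1 \<omega> * X t1 \<omega> \<partial>M) - (\<integral>\<omega>. X s1 \<omega> * X t0 \<omega> \<partial>M))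
      - ((\<integral>\<omega>. X s0 \<omega> * X t1 \<omega> \<partial>M) - (\<integral>\<omega>. X s0 \<omega> * X t0 \<omega> \<partial>M))"
    using nn by (simp add: Bochner_Integration.integral_diff PI)
  also have "\<dots> = R s1 t1 - R s1 t0 - R s0 t1 + R s0 t0"
    using nn by (simp add: Rf)
  finally show ?thesis .
qed

lemma covar_self_nonneg: "covar M Y Y \<ge> 0"
  unfolding covar_def by (simp add: power2_eq_square[symmetric])

lemma pow_powr: "(x::real) > 0 \<Longrightarrow> (x ^ m) powr r = (x powr r) ^ m"
  by (simp add: powr_realpow[symmetric] powr_powr powr_power mult.commute)

lemma delta_formula:
  fixes M :: "'a measure" and X :: "real \<Rightarrow> 'a \<Rightarrow> real"
    and R :: "real \<Rightarrow> real \<Rightarrow> real" and \<rho> \<alpha> :: real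
  assumes P: "prob_space M"
    and G: "gaussian_process M X"
    and Mean: "\<forall>s\<ge>0. integrable M (X s) \<and> (\<integral>\<omega>. X s \<omega> \<partial>M) = 0"
    and Rd: "\<forall>s\<ge>0. \<forall>t\<ge>0. R s t = covar M (X s) (X t)"
    and Sc: "\<forall>c>0. \<forall>s>0. \<forall>t>0. R (c * s) (c * t) = c powr (2 * \<rho>) * R s t"
    and \<alpha>: "\<alpha> > 1" and j: "j \<ge> 1"
  defines "lam \<equiv> \<alpha> powr \<rho>"
  defines "g \<equiv> (\<lambda>m. R 1 (\<alpha> ^ m) / lam ^ m)"
  defines "V0 \<equiv> R \<alpha> \<alpha> - R \<alpha> 1 - R 1 \<alpha> + R 1 1"
  shows "delta_corr M X \<alpha> k j = (lam\<^sup>2 * g j - lam * g (j - 1) - lam * g (j + 1) + g j) / \<bar>V0\<bar>"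
proof -
  have a0: "\<alpha> > 0" using \<alpha> by simp
  have l0: "lam > 0" unfolding lam_def using a0 by simp
  have pos: "\<alpha> ^ m > 0" for m using a0 by simp
  have nn: "\<alpha> ^ m \<ge> 0" for m using a0 by simp
  have cf: "covar M (incr X \<alpha> p) (incr X \<alpha> q) =
      R (\<alpha>^(p+1)) (\<alpha>^(q+1)) - R (\<alpha>^(p+1)) (\<alpha>^q) - R (\<alpha>^p) (\<alpha>^(q+1)) + R (\<alpha>^p) (\<alpha>^q)" for p q
    unfolding incr_def by (rule cov_formula[OF P G Mean Rd nn nn nn nn])
  have sc: "R (\<alpha>^p * s) (\<alpha>^p * t) = (lam\<^sup>2)^p * R s t" if "s > 0" "t > 0" for p s t
  proof -
    have "R (\<alpha>^p * s) (\<alpha>^p * t) = (\<alpha>^p) powr (2 * \<rho>) * R s t" using Sc pos that by blast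
    also have "(\<alpha>^p) powr (2 * \<rho>) = (lam\<^sup>2)^p"
      unfolding lam_def using a0 by (simp add: pow_powr powr_powr[symmetric] powr_power[symmetric] mult.commute power_mult[symmetric])
    finally show ?thesis .
  qed
  have sc1: "R \<alpha> (\<alpha> * t) = lam\<^sup>2 * R 1 t" if "t > 0" for t
    using sc[of 1 t 1] that by simp
  have gR: "R 1 (\<alpha> ^ m) = lam ^ m * g m" for m
    unfolding g_def using l0 by simp
  define B where "B = lam\<^sup>2 * g j - lam * g (j - 1) - lam * g (j + 1) + g j"
  have pw: "\<alpha>^(p+1) = \<alpha>^p * \<alpha>" "\<alpha>^p = \<alpha>^p * 1" "\<alpha>^(p+q) = \<alpha>^p * \<alpha>^q" "\<alpha>^(p+q+1) = \<alpha>^p * \<alpha>^(q+1)" for p q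
    by (simp_all add: power_add)
  have V: "covar M (incr X \<alpha> p) (incr X \<alpha> p) = (lam\<^sup>2)^p * V0" for p
  proof -
    have "covar M (incr X \<alpha> p) (incr X \<alpha> p) =
        R (\<alpha>^p * \<alpha>) (\<alpha>^p * \<alpha>) - R (\<alpha>^p * \<alpha>) (\<alpha>^p * 1) - R (\<alpha>^p * 1) (\<alpha>^p * \<alpha>) + R (\<alpha>^p * 1) (\<alpha>^p * 1)"
      unfolding cf by (simp add: power_add mult.commute)
    also have "\<dots> = (lam\<^sup>2)^p * V0"
      using sc[of \<alpha> \<alpha> p] sc[of \<alpha> 1 p] sc[of 1 \<alpha> p] sc[of 1 1 p] a0 by (simp add: V0_def algebra_simps)
    finally show ?thesis .
  qed
  obtain j' where j': "j = j' + 1" using j by (metis add.commute le_add_diff_inverse)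
  have C: "covar M (incr X \<alpha> k) (incr X \<alpha> (k + j)) = (lam\<^sup>2)^k * (lam^j * B)"
  proof -
    have "covar M (incr X \<alpha> k) (incr X \<alpha> (k + j)) =
        R (\<alpha>^k * \<alpha>) (\<alpha>^k * \<alpha>^(j+1)) - R (\<alpha>^k * \<alpha>) (\<alpha>^k * \<alpha>^j)
        - R (\<alpha>^k * 1) (\<alpha>^k * \<alpha>^(j+1)) + R (\<alpha>^k * 1) (\<alpha>^k * \<alpha>^j)"
      unfolding cf by (simp add: power_add mult_ac)
    also have "\<dots> = (lam\<^sup>2)^k * (R \<alpha> (\<alpha>^(j+1)) - R \<alpha> (\<alpha>^j) - R 1 (\<alpha>^(j+1)) + R 1 (\<alpha>^j))"
      using sc[of \<alpha> "\<alpha>^(j+1)" k] sc[of \<alpha> "\<alpha>^j" k] sc[of 1 "\<alpha>^(j+1)" k] sc[of 1 "\<alpha>^j" k] a0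
      by (simp add: algebra_simps)
    also have "R \<alpha> (\<alpha>^(j+1)) = lam\<^sup>2 * R 1 (\<alpha>^j)" using sc1[of "\<alpha>^j"] a0 by (simp add: mult.commute)
    also have "R \<alpha> (\<alpha>^j) = lam\<^sup>2 * R 1 (\<alpha>^j')" using sc1[of "\<alpha>^j'"] a0 j' by (simp add: mult.commute)
    also have "lam\<^sup>2 * R 1 (\<alpha>^j) - lam\<^sup>2 * R 1 (\<alpha>^j') - R 1 (\<alpha>^(j+1)) + R 1 (\<alpha>^j) = lam^j * B"
      unfolding gR B_def using j' l0 by (simp add: algebra_simps power2_eq_square)
    finally show ?thesis .
  qed
  have "sqrt (covar M (incr X \<alpha> k) (incr X \<alpha> k) * covar M (incr X \<alpha> (k + j)) (incr X \<alpha> (k + j)))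
      = sqrt (((lam\<^sup>2)^k * lam^j * \<bar>V0\<bar>)\<^sup>2)"
    unfolding V by (simp add: power_add power_mult_distrib power2_eq_square algebra_simps power_mult[symmetric])
  also have "\<dots> = (lam\<^sup>2)^k * lam^j * \<bar>V0\<bar>" using l0 by simp
  finally have S: "sqrt (covar M (incr X \<alpha> k) (incr X \<alpha> k) * covar M (incr X \<alpha> (k + j)) (incr X \<alpha> (k + j)))
      = (lam\<^sup>2)^k * lam^j * \<bar>V0\<bar>" .
  show ?thesis
    unfolding delta_corr_def correl_def S C B_def[symmetric] using l0 by simp
qed

lemma delta_bound:
  fixes M :: "'a measure" and X :: "real \<Rightarrow> 'a \<Rightarrow> real"
    and R :: "real \<Rightarrow> real \<Rightarrow> real" and \<rho> \<eta> \<alpha> :: real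
  assumes P: "prob_space M"
    and G: "gaussian_process M X"
    and Mean: "\<forall>s\<ge>0. integrable M (X s) \<and> (\<integral>\<omega>. X s \<omega> \<partial>M) = 0"
    and Rd: "\<forall>s\<ge>0. \<forall>t\<ge>0. R s t = covar M (X s) (X t)"
    and Sc: "\<forall>c>0. \<forall>s>0. \<forall>t>0. R (c * s) (c * t) = c powr (2 * \<rho>) * R s t"
    and eta: "\<eta> > 0"
    and O: "(\<lambda>x. x powr (-\<rho>) * R 1 x) \<in> O[at_top](\<lambda>x. ln x powr (-\<eta>))"
    and \<alpha>: "\<alpha> > 1"
  shows "\<exists>D\<ge>0. \<exists>J\<ge>(1::nat). \<forall>k j. j \<ge> J \<longrightarrow> \<bar>delta_corr M X \<alpha> k j\<bar> \<le> D * real j powr (-\<eta>)"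
proof -
  define lam where "lam = \<alpha> powr \<rho>"
  define g where "g = (\<lambda>m. R 1 (\<alpha> ^ m) / lam ^ m)"
  define V0 where "V0 = R \<alpha> \<alpha> - R \<alpha> 1 - R 1 \<alpha> + R 1 1"
  define L where "L = ln \<alpha>"
  have a0: "\<alpha> > 0" using \<alpha> by simp
  have l0: "lam > 0" unfolding lam_def using a0 by simp
  have L0: "L > 0" unfolding L_def using \<alpha> by simp
  from O obtain H where H: "H > 0"
    "eventually (\<lambda>x. norm (x powr (-\<rho>) * R 1 x) \<le> H * norm (ln x powr (-\<eta>))) at_top"
    by (elim landau_o.bigE)
  then obtain x0 where x0: "\<And>x. x \<ge> x0 \<Longrightarrow> norm (x powr (-\<rho>) * R 1 x) \<le> H * norm (ln x powr (-\<eta>))"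
    by (auto simp: eventually_at_top_linorder)
  obtain m0 where m0: "max x0 2 < \<alpha> ^ m0" using real_arch_pow[OF \<alpha>] by blast
  have gb: "\<bar>g m\<bar> \<le> H * (real m * L) powr (-\<eta>)" if m: "m \<ge> m0" for m
  proof -
    have "\<alpha> ^ m0 \<le> \<alpha> ^ m" using m \<alpha> by (simp add: power_increasing)
    then have xm: "\<alpha> ^ m \<ge> x0" "\<alpha> ^ m > 2" using m0 by auto
    have lnm: "ln (\<alpha> ^ m) = real m * L" using a0 by (simp add: ln_realpow L_def)
    have "(\<alpha> ^ m) powr (-\<rho>) = 1 / lam ^ m"
      using a0 by (simp add: pow_powr lam_def powr_minus_divide power_one_over[symmetric] powr_power)
    then have "\<bar>g m\<bar> = norm ((\<alpha> ^ m) powr (-\<rho>) * R 1 (\<alpha> ^ m))"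
      by (simp add: g_def abs_mult)
    also have "\<dots> \<le> H * norm (ln (\<alpha> ^ m) powr (-\<eta>))" by (rule x0[OF xm(1)])
    also have "\<dots> = H * (real m * L) powr (-\<eta>)" by (simp add: lnm)
    finally show ?thesis .
  qed
  define D where "D = H * (lam + 1)\<^sup>2 * (L / 2) powr (-\<eta>) / \<bar>V0\<bar>"
  have D0: "D \<ge> 0" unfolding D_def using H by simp
  have main: "\<bar>delta_corr M X \<alpha> k j\<bar> \<le> D * real j powr (-\<eta>)" if j: "j \<ge> max (m0 + 1) 2" for k j
  proof -
    have j1: "j \<ge> 1" using j by simp
    have df: "delta_corr M X \<alpha> k j = (lam\<^sup>2 * g j - lam * g (j - 1) - lam * g (j + 1) + g j) / \<bar>V0\<bar>"
      unfolding lam_def g_def V0_def by (rule delta_formula[OF P G Mean Rd Sc \<alpha> j1])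
    define T where "T = ((real j - 1) * L) powr (-\<eta>)"
    have jm: "real (j - 1) = real j - 1" using j1 by simp
    have dec: "(real m * L) powr (-\<eta>) \<le> T" if "m \<ge> j - 1" for m
      unfolding T_def
    proof (rule powr_mono2')
      show "- \<eta> \<le> 0" using eta by simp
      show "0 < (real j - 1) * L" using j L0 by simp
      show "(real j - 1) * L \<le> real m * L" using that L0 jm
        by (intro mult_right_mono) (auto simp flip: of_nat_le_iff)
    qed
    have bm: "\<bar>g m\<bar> \<le> H * T" if "m \<ge> m0" "m \<ge> j - 1" for m
    proof -
      have "\<bar>g m\<bar> \<le> H * (real m * L) powr (-\<eta>)" by (rule gb[OF that(1)])
      also have "\<dots> \<le> H * T" using dec[OF that(2)] H by (intro mult_left_mono) auto
      finally show ?thesis .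
    qed
    have b1: "\<bar>g j\<bar> \<le> H * T" using j by (intro bm) auto
    have b2: "\<bar>g (j - 1)\<bar> \<le> H * T" using j by (intro bm) auto
    have b3: "\<bar>g (j + 1)\<bar> \<le> H * T" using j by (intro bm) auto
    have "\<bar>lam\<^sup>2 * g j - lam * g (j - 1) - lam * g (j + 1) + g j\<bar>
        \<le> lam\<^sup>2 * \<bar>g j\<bar> + lam * \<bar>g (j - 1)\<bar> + lam * \<bar>g (j + 1)\<bar> + \<bar>g j\<bar>"
    proof -
      have tri: "\<bar>A - B - C + E\<bar> \<le> \<bar>A\<bar> + \<bar>B\<bar> + \<bar>C\<bar> + \<bar>E\<bar>" for A B C E :: real by arith
      have "\<bar>lam\<^sup>2 * g j\<bar> = lam\<^sup>2 * \<bar>g j\<bar>" "\<bar>lam * g (j - 1)\<bar> = lam * \<bar>g (j - 1)\<bar>"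
        "\<bar>lam * g (j + 1)\<bar> = lam * \<bar>g (j + 1)\<bar>" using l0 by (simp_all add: abs_mult)
      then show ?thesis using tri[of "lam\<^sup>2 * g j" "lam * g (j - 1)" "lam * g (j + 1)" "g j"] by simp
    qed
    also have "\<dots> \<le> lam\<^sup>2 * (H * T) + lam * (H * T) + lam * (H * T) + H * T"
      using b1 b2 b3 l0 by (intro add_mono mult_left_mono) auto
    also have "\<dots> = H * (lam + 1)\<^sup>2 * T" by (simp add: power2_eq_square algebra_simps)
    also have "\<dots> \<le> H * (lam + 1)\<^sup>2 * ((L / 2) powr (-\<eta>) * real j powr (-\<eta>))"
    proof -
      have "T \<le> (real j / 2 * L) powr (-\<eta>)"
        unfolding T_def using j L0 eta by (intro powr_mono2') auto
      also have "\<dots> = (L / 2) powr (-\<eta>) * real j powr (-\<eta>)"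
        using L0 by (simp add: powr_mult[symmetric] mult_ac)
      finally show ?thesis using H by (intro mult_left_mono) auto
    qed
    finally have "\<bar>lam\<^sup>2 * g j - lam * g (j - 1) - lam * g (j + 1) + g j\<bar> \<le>
        H * (lam + 1)\<^sup>2 * ((L / 2) powr (-\<eta>) * real j powr (-\<eta>))" .
    then have "\<bar>lam\<^sup>2 * g j - lam * g (j - 1) - lam * g (j + 1) + g j\<bar> / \<bar>V0\<bar> \<le>
        H * (lam + 1)\<^sup>2 * ((L / 2) powr (-\<eta>) * real j powr (-\<eta>)) / \<bar>V0\<bar>"
      by (intro divide_right_mono) auto
    then show ?thesis unfolding df D_def by (simp add: abs_divide mult_ac)
  qed
  show ?thesis
    using D0 main by (intro exI[of _ D] conjI exI[of _ "max (m0 + 1) 2"]) auto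
qed

lemma ev_log: "\<epsilon> > 0 \<Longrightarrow> eventually (\<lambda>x::real. (4 * (ln x + l) + 8)\<^sup>2 \<le> x powr (\<epsilon> / 2)) at_top"
  by real_asymp

lemma JJ_le:
  fixes c p L :: real
  assumes c: "1/2 \<le> c" "c \<le> 1" and L: "L \<ge> 1" and p: "p \<ge> 1"
  shows "JJ c (sqrt (2 * (ln p + ln L))) \<le> (4 * (ln p + ln L) + 8) * p powr (-c)"
proof -
  define q where "q = ln p + ln L"
  have q0: "q \<ge> 0" using L p by (simp add: q_def)
  have sq: "(sqrt (2 * q))\<^sup>2 = 2 * q" using q0 by simp
  have c0: "c > 0" using c by simp
  have "JJ c (sqrt (2 * q)) = (2 * q / c + 2 / c\<^sup>2) * exp (- (c * q))"
    unfolding JJ_def sq by simp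
  also have "\<dots> \<le> (4 * q + 8) * exp (- (c * q))"
  proof -
    have "2 * q / c \<le> 4 * q"
      using c0 c q0 mult_left_mono[of 1 "2 * c" q] by (simp add: divide_le_eq mult_ac)
    moreover have "2 / c\<^sup>2 \<le> 8"
    proof -
      have "(1/2)\<^sup>2 \<le> c\<^sup>2" using c by (intro power_mono) auto
      then show ?thesis using c0 by (simp add: divide_le_eq power_divide)
    qed
    ultimately show ?thesis by (intro mult_right_mono) auto
  qed
  also have "exp (- (c * q)) \<le> p powr (-c)"
  proof -
    have "exp (- (c * q)) = exp (- c * ln p) * exp (- (c * ln L))"
      by (simp add: q_def exp_add[symmetric] algebra_simps)
    also have "exp (- (c * ln L)) \<le> 1" using L c0 by simp
    then have "exp (- c * ln p) * exp (- (c * ln L)) \<le> exp (- c * ln p)"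
      by (intro mult_left_le) auto
    also have "exp (- c * ln p) = p powr (-c)" using p by (simp add: powr_def)
    finally show ?thesis by simp
  qed
  then have "(4 * q + 8) * exp (- (c * q)) \<le> (4 * q + 8) * p powr (-c)"
    using q0 by (intro mult_left_mono) auto
  finally show ?thesis by (simp add: q_def)
qed

lemma JJ_nonneg': "c > 0 \<Longrightarrow> JJ c a \<ge> 0" by (rule JJ_nonneg)

theorem lemma4p6:
  fixes M :: "'a measure" and X :: "real \<Rightarrow> 'a \<Rightarrow> real"
    and R :: "real \<Rightarrow> real \<Rightarrow> real" and \<rho> \<eta> :: real
  assumes "prob_space M"
    and "gaussian_process M X"
    and "\<forall>s\<ge>0. integrable M (X s) \<and> (\<integral>\<omega>. X s \<omega> \<partial>M) = 0"
    and "\<forall>\<omega>\<in>space M. continuous_on {0..} (\<lambda>s. X s \<omega>)"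
    and "\<forall>s\<ge>0. \<forall>t\<ge>0. R s t = covar M (X s) (X t)"
    and "\<rho> > 0"
    and "\<forall>c>0. \<forall>s>0. \<forall>t>0. R (c * s) (c * t) = c powr (2 * \<rho>) * R s t"
    and "\<eta> > 0"
    and "(\<lambda>x. x powr (-\<rho>) * R 1 x) \<in> O[at_top](\<lambda>x. ln x powr (-\<eta>))"
  shows "\<exists>\<alpha>\<^sub>0. \<forall>\<alpha>\<ge>\<alpha>\<^sub>0. \<alpha> > 1 \<longrightarrow> (\<exists>C>0. \<forall>\<epsilon>. 0 < \<epsilon> \<and> \<epsilon> < min \<eta> 1 / 2 \<longrightarrow>
           (\<exists>Mb::nat. Mb > 0 \<and> (\<forall>k j. k \<ge> 1 \<longrightarrow> j \<ge> Mb \<longrightarrow>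
              \<bar>phi_fun (delta_corr M X \<alpha> k j) (a_seq \<alpha> k) (a_seq \<alpha> (k + j))\<bar>
                \<le> C * (1 / real k powr (1 + \<epsilon>)) * (1 / real j powr (1 + \<eta> - 2 * \<epsilon>)))))"
proof -
  note P = assms(1) and G = assms(2) and Mean = assms(3) and Rd = assms(5)
    and Sc = assms(7) and eta = assms(8) and O = assms(9)
  have "\<forall>\<alpha>\<ge>exp (exp 1). \<alpha> > 1 \<longrightarrow> (\<exists>C>0. \<forall>\<epsilon>. 0 < \<epsilon> \<and> \<epsilon> < min \<eta> 1 / 2 \<longrightarrow>
           (\<exists>Mb::nat. Mb > 0 \<and> (\<forall>k j. k \<ge> 1 \<longrightarrow> j \<ge> Mb \<longrightarrow>
              \<bar>phi_fun (delta_corr M X \<alpha> k j) (a_seq \<alpha> k) (a_seq \<alpha> (k + j))\<bar>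
                \<le> C * (1 / real k powr (1 + \<epsilon>)) * (1 / real j powr (1 + \<eta> - 2 * \<epsilon>)))))"
  proof (intro allI impI)
    fix \<alpha> :: real
    assume \<alpha>0: "\<alpha> \<ge> exp (exp 1)" and \<alpha>1: "\<alpha> > 1"
    define L where "L = ln \<alpha>"
    have L1: "L \<ge> exp 1" unfolding L_def using \<alpha>0 \<alpha>1 by (simp add: ln_ge_iff)
    have Lpos: "L > 0" using L1 exp_gt_zero[of 1] by linarith
    have lnL: "ln L \<ge> 1" using L1 Lpos by (simp add: ln_ge_iff)
    have Lge1: "L \<ge> 1" using L1 by (smt (verit) one_le_exp_iff)
    obtain D J where D0: "D \<ge> 0" and J1: "J \<ge> (1::nat)"
      and DJ: "\<And>k j. j \<ge> J \<Longrightarrow> \<bar>delta_corr M X \<alpha> k j\<bar> \<le> D * real j powr (-\<eta>)"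
      using delta_bound[OF P G Mean Rd Sc eta O \<alpha>1] by blast
    define C where "C = max (2 * D) 1"
    have C0: "C > 0" unfolding C_def by simp
    show "\<exists>C>0. \<forall>\<epsilon>. 0 < \<epsilon> \<and> \<epsilon> < min \<eta> 1 / 2 \<longrightarrow>
           (\<exists>Mb::nat. Mb > 0 \<and> (\<forall>k j. k \<ge> 1 \<longrightarrow> j \<ge> Mb \<longrightarrow>
              \<bar>phi_fun (delta_corr M X \<alpha> k j) (a_seq \<alpha> k) (a_seq \<alpha> (k + j))\<bar>
                \<le> C * (1 / real k powr (1 + \<epsilon>)) * (1 / real j powr (1 + \<eta> - 2 * \<epsilon>))))"
    proof (intro exI[of _ C] conjI allI impI C0)
      fix \<epsilon> :: real
      assume "0 < \<epsilon> \<and> \<epsilon> < min \<eta> 1 / 2"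
      then have e0: "\<epsilon> > 0" and e1: "\<epsilon> < 1/2" and e2: "\<epsilon> < \<eta> / 2" by auto
      have "((\<lambda>j. D * real j powr (-\<eta>)) \<longlongrightarrow> D * 0) sequentially"
        using eta by (intro tendsto_mult tendsto_const tendsto_neg_powr filterlim_real_sequentially) auto
      then have "eventually (\<lambda>j. D * real j powr (-\<eta>) < min (1/2) (\<epsilon>/4)) sequentially"
        using e0 by (intro order_tendstoD(2)) auto
      then obtain N1 where N1: "\<And>j. j \<ge> N1 \<Longrightarrow> D * real j powr (-\<eta>) < min (1/2) (\<epsilon>/4)"
        by (auto simp: eventually_sequentially)
      obtain x1 where x1: "\<And>x. x \<ge> x1 \<Longrightarrow> (4 * (ln x + ln L) + 8)\<^sup>2 \<le> x powr (\<epsilon> / 2)"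
        using ev_log[OF e0, of "ln L"] by (auto simp: eventually_at_top_linorder)
      define Mb where "Mb = max (max N1 J) (nat \<lceil>x1\<rceil>)"
      show "\<exists>Mb::nat. Mb > 0 \<and> (\<forall>k j. k \<ge> 1 \<longrightarrow> j \<ge> Mb \<longrightarrow>
              \<bar>phi_fun (delta_corr M X \<alpha> k j) (a_seq \<alpha> k) (a_seq \<alpha> (k + j))\<bar>
                \<le> C * (1 / real k powr (1 + \<epsilon>)) * (1 / real j powr (1 + \<eta> - 2 * \<epsilon>)))"
      proof (intro exI[of _ Mb] conjI allI impI)
        show "Mb > 0" unfolding Mb_def using J1 by simp
        fix k j :: nat
        assume k1: "k \<ge> 1" and jM: "j \<ge> Mb"
        show "\<bar>phi_fun (delta_corr M X \<alpha> k j) (a_seq \<alpha> k) (a_seq \<alpha> (k + j))\<bar>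
                \<le> C * (1 / real k powr (1 + \<epsilon>)) * (1 / real j powr (1 + \<eta> - 2 * \<epsilon>))"
        proof -
          define \<delta> where "\<delta> = delta_corr M X \<alpha> k j"
          define d where "d = \<bar>\<delta>\<bar>"
          define c where "c = 1 - d"
          define p where "p = real k + 1"
          define m where "m = real (k + j) + 1"
          define Pf where "Pf x = 4 * (ln x + ln L) + 8" for x :: real
          have jJ: "j \<ge> J" "j \<ge> N1" "real j \<ge> x1" using jM unfolding Mb_def
            by auto
          have j1: "j \<ge> 1" using jJ J1 by simp
          have dD: "d \<le> D * real j powr (-\<eta>)" unfolding d_def \<delta>_def by (rule DJ[OF jJ(1)])
          have dsmall: "d \<le> 1/2" "d \<le> \<epsilon>/4" using dD N1[OF jJ(2)] by auto
          have d0: "d \<ge> 0" by (simp add: d_def)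
          have c1: "1/2 \<le> c" "c \<le> 1" "c \<ge> 1 - \<epsilon>/4" using dsmall d0 by (auto simp: c_def)
          have p1: "p \<ge> 2" "p \<ge> real k" using k1 by (auto simp: p_def)
          have m1: "m \<ge> p" "m \<ge> real j" "m \<ge> real k" "m \<ge> x1" using jJ by (auto simp: m_def p_def)
          have ka: "a_seq \<alpha> k = sqrt (2 * (ln p + ln L))" by (simp add: a_seq_def p_def L_def)
          have kb: "a_seq \<alpha> (k + j) = sqrt (2 * (ln m + ln L))" by (simp add: a_seq_def m_def L_def)
          have a_ge: "sqrt (2 * (ln x + ln L)) \<ge> 1" if "x \<ge> 1" for x :: real
          proof -
            have "1 \<le> 2 * (ln x + ln L)" using add_mono[OF ln_ge_zero[OF that] lnL] by simp
            then show ?thesis by (simp add: real_le_rsqrt)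
          qed
          have Pf0: "Pf x \<ge> 0" if "x \<ge> 1" for x :: real using that lnL by (simp add: Pf_def)
          have Pfmono: "Pf p \<le> Pf m" using m1 p1 by (simp add: Pf_def)
          have "\<bar>phi_fun \<delta> (a_seq \<alpha> k) (a_seq \<alpha> (k + j))\<bar>
              \<le> 2 * d * (JJ c (a_seq \<alpha> k) * JJ c (a_seq \<alpha> (k + j)))"
            unfolding d_def c_def ka kb
            by (rule phi_bound) (use dsmall a_ge p1 m1 in \<open>auto simp: d_def\<close>)
          also have "\<dots> \<le> 2 * d * ((Pf m * p powr (-(1 - \<epsilon>/4))) * (Pf m * m powr (-(1 - \<epsilon>/4))))"
          proof (intro mult_left_mono mult_mono)
            have "JJ c (a_seq \<alpha> k) \<le> Pf p * p powr (-c)"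
              unfolding ka Pf_def using c1 Lge1 p1 by (intro JJ_le) auto
            also have "\<dots> \<le> Pf m * p powr (-(1 - \<epsilon>/4))"
              using Pfmono Pf0[of p] p1 c1 by (intro mult_mono powr_mono) auto
            finally show "JJ c (a_seq \<alpha> k) \<le> Pf m * p powr (-(1 - \<epsilon>/4))" .
            have "JJ c (a_seq \<alpha> (k + j)) \<le> Pf m * m powr (-c)"
              unfolding kb Pf_def using c1 Lge1 p1 m1 by (intro JJ_le) auto
            also have "\<dots> \<le> Pf m * m powr (-(1 - \<epsilon>/4))"
              using Pf0[of m] p1 m1 c1 by (intro mult_left_mono powr_mono) auto
            finally show "JJ c (a_seq \<alpha> (k + j)) \<le> Pf m * m powr (-(1 - \<epsilon>/4))" .
            show "0 \<le> Pf m * p powr (-(1 - \<epsilon>/4))" using Pf0[of m] p1 m1 by simp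
            show "0 \<le> JJ c (a_seq \<alpha> (k + j))" using c1 by (intro JJ_nonneg) auto
            show "0 \<le> 2 * d" using d0 by simp
          qed
          also have "\<dots> = 2 * d * ((Pf m)\<^sup>2 * (p powr (-(1 - \<epsilon>/4)) * m powr (-(1 - \<epsilon>/4))))"
            by (simp add: power2_eq_square mult_ac)
          also have "\<dots> \<le> 2 * d * (m powr (\<epsilon>/2) * (p powr (-(1 - \<epsilon>/4)) * m powr (-(1 - \<epsilon>/4))))"
            using x1[OF m1(4)] d0 unfolding Pf_def by (intro mult_left_mono mult_right_mono) auto
          also have "\<dots> = 2 * d * (p powr (-(1 - \<epsilon>/4)) * m powr (- (5 * \<epsilon> / 4)) * m powr (-(1 - 2 * \<epsilon>)))"
            by (simp add: powr_add[symmetric] mult_ac)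
          also have "\<dots> \<le> 2 * d * (real k powr (-(1 - \<epsilon>/4)) * real k powr (- (5 * \<epsilon> / 4)) * real j powr (-(1 - 2 * \<epsilon>)))"
          proof -
            have kp: "real k > 0" "real j > 0" using k1 j1 by auto
            have "p powr (-(1 - \<epsilon>/4)) \<le> real k powr (-(1 - \<epsilon>/4))"
              using kp p1 e1 by (intro powr_mono2') auto
            moreover have "m powr (- (5 * \<epsilon> / 4)) \<le> real k powr (- (5 * \<epsilon> / 4))"
              using kp m1 e0 by (intro powr_mono2') auto
            moreover have "m powr (-(1 - 2 * \<epsilon>)) \<le> real j powr (-(1 - 2 * \<epsilon>))"
              using kp m1 e1 by (intro powr_mono2') auto
            ultimately show ?thesis using d0 by (intro mult_left_mono mult_mono) auto
          qed
          also have "\<dots> = 2 * d * (real k powr (-(1 + \<epsilon>)) * real j powr (-(1 - 2 * \<epsilon>)))"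
          proof -
            have "real k powr (-(1 - \<epsilon>/4)) * real k powr (- (5 * \<epsilon> / 4)) = real k powr (-(1 - \<epsilon>/4) + - (5 * \<epsilon> / 4))"
              by (simp only: powr_add)
            also have "-(1 - \<epsilon>/4) + - (5 * \<epsilon> / 4) = -(1 + \<epsilon>)" by simp
            finally show ?thesis by simp
          qed
          also have "\<dots> \<le> 2 * (D * real j powr (-\<eta>)) * (real k powr (-(1 + \<epsilon>)) * real j powr (-(1 - 2 * \<epsilon>)))"
            using dD by (intro mult_right_mono mult_left_mono) auto
          also have "\<dots> = (2 * D) * (1 / real k powr (1 + \<epsilon>)) * (1 / real j powr (1 + \<eta> - 2 * \<epsilon>))"
          proof -
            have "real j powr (-\<eta>) * real j powr (-(1 - 2 * \<epsilon>)) = real j powr (-\<eta> + -(1 - 2 * \<epsilon>))"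
              by (simp only: powr_add)
            also have "-\<eta> + -(1 - 2 * \<epsilon>) = -(1 + \<eta> - 2 * \<epsilon>)" by simp
            also have "real j powr (-(1 + \<eta> - 2 * \<epsilon>)) = 1 / real j powr (1 + \<eta> - 2 * \<epsilon>)"
              by (rule powr_minus_divide)
            finally have jj: "real j powr (-\<eta>) * real j powr (-(1 - 2 * \<epsilon>)) = 1 / real j powr (1 + \<eta> - 2 * \<epsilon>)" .
            have kk: "real k powr (-(1 + \<epsilon>)) = 1 / real k powr (1 + \<epsilon>)" by (rule powr_minus_divide)
            have "2 * (D * real j powr (-\<eta>)) * (real k powr (-(1 + \<epsilon>)) * real j powr (-(1 - 2 * \<epsilon>)))
                = (2 * D) * real k powr (-(1 + \<epsilon>)) * (real j powr (-\<eta>) * real j powr (-(1 - 2 * \<epsilon>)))"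
              by (simp only: mult_ac)
            then show ?thesis by (simp only: jj kk)
          qed
          also have "\<dots> \<le> C * (1 / real k powr (1 + \<epsilon>)) * (1 / real j powr (1 + \<eta> - 2 * \<epsilon>))"
            unfolding C_def by (intro mult_right_mono) auto
          finally show ?thesis unfolding \<delta>_def .
        qed
      qed
    qed
  qed
  then show ?thesis by blast
qed

end
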